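(* Let $F=(V,E)$ be a forest whose vertices are colored with $k\ge 2$ colors in a ratio $c_1:c_2:\dots:c_k$, where $c_i\in\mathbb{N}_{>0}$ for all $i\in[k]$, $\gcd(c_1,\dots,c_k)=1$ and $\sum_{i=1}^k c_i\ge 3$. Then every set of every minimum-cost fair clustering of $F$ has exactly $d=\sum_{i=1}^k c_i$ vertices.
   Context: All graphs are finite, simple and undirected. For a graph $G=(V,E)$ and a partition $\mathcal{P}$ of $V$, write $\mathcal{P}[u]$ for the set of $\mathcal{P}$ containing $u$. The cost is $$\mathrm{cost}(G,\mathcal{P})=\Big|\Big\{\{u,v\}\in\tbinom{V}{2}\setminus E : \mathcal{P}[u]=\mathcal{P}[v]\Big\}\Big|+\Big|\Big\{\{u,v\}\in E:\mathcal{P}[u]\neq\mathcal{P}[v]\Big\}\Big|.$$ A coloring is a map $c:V\to[k]$; let $V_i=c^{-1}(i)$. A set $S\subseteq V$ is fair if $|S\cap V_i|/|S|=|V_i|/|V|$ for every $i\in[k]$. A fair clustering is a partition of $V$ all of whose sets are fair; it is minimum-cost if no fair clustering has smaller cost. The colors are in ratio $c_1:\dots:c_k$ (positive integers) if there is $t\in\mathbb{N}_{>0}$ with $|V_i|=t\,c_i$ for all $i\in[k]$. *)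

theory Defs
  imports Complex_Main "HOL-Library.Disjoint_Sets"
begin

definition simple_graph :: "'a set \<Rightarrow> 'a set set \<Rightarrow> bool" where
  "simple_graph V E \<longleftrightarrow> finite V \<and>
     (\<forall>e\<in>E. \<exists>u v. u \<in> V \<and> v \<in> V \<and> u \<noteq> v \<and> e = {u, v})"

definition is_cycle :: "'a set \<Rightarrow> 'a set set \<Rightarrow> 'a list \<Rightarrow> bool" where
  "is_cycle V E xs \<longleftrightarrow> length xs \<ge> 3 \<and> distinct xs \<and> set xs \<subseteq> V \<and>
     (\<forall>i. Suc i < length xs \<longrightarrow> {xs ! i, xs ! Suc i} \<in> E) \<and>
     {last xs, hd xs} \<in> E"

definition forest :: "'a set \<Rightarrow> 'a set set \<Rightarrow> bool" where
  "forest V E \<longleftrightarrow> simple_graph V E \<and> (\<nexists>xs. is_cycle V E xs)"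

definition cluster_of :: "'a set set \<Rightarrow> 'a \<Rightarrow> 'a set" where
  "cluster_of P u = (THE S. S \<in> P \<and> u \<in> S)"

definition cost :: "'a set \<Rightarrow> 'a set set \<Rightarrow> 'a set set \<Rightarrow> nat" where
  "cost V E P =
     card {{u, v} | u v. u \<in> V \<and> v \<in> V \<and> u \<noteq> v \<and> {u, v} \<notin> E \<and>
                          cluster_of P u = cluster_of P v}
   + card {e \<in> E. \<exists>u v. e = {u, v} \<and> cluster_of P u \<noteq> cluster_of P v}"

definition color_class :: "'a set \<Rightarrow> ('a \<Rightarrow> nat) \<Rightarrow> nat \<Rightarrow> 'a set" where
  "color_class V col i = {v \<in> V. col v = i}"

definition fair :: "'a set \<Rightarrow> ('a \<Rightarrow> nat) \<Rightarrow> nat \<Rightarrow> 'a set \<Rightarrow> bool" where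
  "fair V col k S \<longleftrightarrow> (\<forall>i\<in>{1..k}.
     real (card (S \<inter> color_class V col i)) / real (card S)
       = real (card (color_class V col i)) / real (card V))"

definition fair_clustering :: "'a set \<Rightarrow> ('a \<Rightarrow> nat) \<Rightarrow> nat \<Rightarrow> 'a set set \<Rightarrow> bool" where
  "fair_clustering V col k P \<longleftrightarrow> partition_on V P \<and> (\<forall>S\<in>P. fair V col k S)"

definition min_cost_fair_clustering ::
  "'a set \<Rightarrow> 'a set set \<Rightarrow> ('a \<Rightarrow> nat) \<Rightarrow> nat \<Rightarrow> 'a set set \<Rightarrow> bool" where
  "min_cost_fair_clustering V E col k P \<longleftrightarrow> fair_clustering V col k P \<and>
     (\<forall>Q. fair_clustering V col k Q \<longrightarrow> cost V E P \<le> cost V E Q)"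

definition in_ratio :: "'a set \<Rightarrow> ('a \<Rightarrow> nat) \<Rightarrow> nat \<Rightarrow> (nat \<Rightarrow> nat) \<Rightarrow> bool" where
  "in_ratio V col k c \<longleftrightarrow> (\<exists>t::nat. t > 0 \<and>
     (\<forall>i\<in>{1..k}. card (color_class V col i) = t * c i))"

end

theory Submission
  imports Defs
begin


definition path_in :: "'a set set \<Rightarrow> 'a set \<Rightarrow> 'a list \<Rightarrow> bool" where
 "path_in E W xs \<longleftrightarrow> distinct xs \<and> set xs \<subseteq> W \<and>
    (\<forall>i. Suc i < length xs \<longrightarrow> {xs ! i, xs ! Suc i} \<in> E)"

lemma forest_noloop: "forest V E \<Longrightarrow> {u,u} \<notin> E"
  unfolding forest_def simple_graph_def by (fastforce simp: doubleton_eq_iff)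

lemma forest_edge: "forest V E \<Longrightarrow> e \<in> E \<Longrightarrow> \<exists>a b. a \<in> V \<and> b \<in> V \<and> a \<noteq> b \<and> e = {a,b}"
  unfolding forest_def simple_graph_def by blast

lemma leaf_exists:
  assumes f: "forest V E" and W: "W \<subseteq> V" "W \<noteq> {}"
  shows "\<exists>w\<in>W. card {u\<in>W. {w,u} \<in> E} \<le> 1"
proof (rule ccontr)
  assume "\<not> ?thesis"
  hence deg: "\<And>w. w \<in> W \<Longrightarrow> 2 \<le> card {u\<in>W. {w,u} \<in> E}" by force
  have finW: "finite W" using f W unfolding forest_def simple_graph_def by (meson finite_subset)
  have noloop: "\<And>u. {u,u} \<notin> E" using forest_noloop[OF f] .
  define Q where "Q = (\<lambda>n. \<exists>xs. path_in E W xs \<and> xs \<noteq> [] \<and> length xs = n)"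
  obtain w0 where "w0 \<in> W" using W by blast
  hence "Q 1" unfolding Q_def path_in_def by (intro exI[of _ "[w0]"]) auto
  moreover have "\<forall>y. Q y \<longrightarrow> y \<le> card W"
    unfolding Q_def path_in_def using finW by (metis card_mono distinct_card)
  ultimately obtain n where "Q n" and nmax: "\<forall>y. Q y \<longrightarrow> y \<le> n"
    using Nat.ex_has_greatest_nat[of Q 1 "card W"] by blast
  then obtain xs where xs: "path_in E W xs" "xs \<noteq> []" "length xs = n" unfolding Q_def by blast
  define z where "z = last xs"
  have zW: "z \<in> W" using xs unfolding z_def path_in_def by auto
  define N where "N = {u\<in>W. {z,u} \<in> E}"
  have Nsub: "N \<subseteq> set xs - {z}"
  proof
    fix u assume u: "u \<in> N"
    have "u \<noteq> z" using u noloop unfolding N_def by auto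
    moreover have "u \<in> set xs"
    proof (rule ccontr)
      assume un: "u \<notin> set xs"
      have "path_in E W (xs @ [u])"
        unfolding path_in_def
      proof (intro conjI allI impI)
        show "distinct (xs @ [u])" using xs un unfolding path_in_def by auto
        show "set (xs @ [u]) \<subseteq> W" using xs u unfolding path_in_def N_def by auto
        fix i assume i: "Suc i < length (xs @ [u])"
        show "{(xs @ [u]) ! i, (xs @ [u]) ! Suc i} \<in> E"
        proof (cases "Suc i < length xs")
          case True then show ?thesis using xs unfolding path_in_def by (simp add: nth_append)
        next
          case False
          hence "i = length xs - 1" "Suc i = length xs" using i by auto
          then show ?thesis using u xs(2) unfolding N_def z_def
            by (simp add: nth_append last_conv_nth)
        qed
      qed
      hence "Q (Suc n)" unfolding Q_def using xs by (intro exI[of _ "xs @ [u]"]) auto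
      thus False using nmax by fastforce
    qed
    ultimately show "u \<in> set xs - {z}" by blast
  qed
  have cN: "2 \<le> card N" using deg zW unfolding N_def by blast
  show False
  proof (cases "length xs = 1")
    case True
    then obtain a where "xs = [a]" by (metis One_nat_def length_0_conv length_Suc_conv)
    hence "set xs - {z} = {}" unfolding z_def by simp
    thus False using Nsub cN by (metis card.empty not_numeral_le_zero subset_empty)
  next
    case False
    hence len: "length xs \<ge> 2" using xs(2) by (cases xs; cases "tl xs") auto
    define p where "p = xs ! (length xs - 2)"
    have "finite N" using finW unfolding N_def by auto
    have "N - {p} \<noteq> {}"
    proof
      assume "N - {p} = {}"
      hence "N \<subseteq> {p}" by blast
      hence "card N \<le> 1" by (metis card.empty card.insert empty_iff finite.intros(1) le_SucI
           subset_singletonD order_refl One_nat_def)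
      thus False using cN by simp
    qed
    then obtain y where y: "y \<in> N" "y \<noteq> p" by blast
    then have "y \<in> set xs" "y \<noteq> z" using Nsub by auto
    then obtain j where j: "j < length xs" "xs ! j = y" by (meson in_set_conv_nth)
    have "j \<noteq> length xs - 1" using j \<open>y \<noteq> z\<close> xs(2) unfolding z_def by (auto simp: last_conv_nth)
    moreover have "j \<noteq> length xs - 2" using j y unfolding p_def by auto
    ultimately have j3: "j + 3 \<le> length xs" using j len by linarith
    define ys where "ys = drop j xs"
    have "is_cycle V E ys"
      unfolding is_cycle_def
    proof (intro conjI allI impI)
      show "3 \<le> length ys" using j3 unfolding ys_def by simp
      show "distinct ys" using xs unfolding ys_def path_in_def by simp
      show "set ys \<subseteq> V" using xs W unfolding ys_def path_in_def by (meson order_trans set_drop_subset)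
      fix i assume "Suc i < length ys"
      hence "Suc (j + i) < length xs" unfolding ys_def by simp
      thus "{ys ! i, ys ! Suc i} \<in> E" using xs unfolding ys_def path_in_def by simp
    next
      have "last ys = z" using j3 unfolding ys_def z_def by simp
      moreover have "hd ys = y" using j j3 unfolding ys_def by (simp add: hd_drop_conv_nth)
      ultimately show "{last ys, hd ys} \<in> E" using y unfolding N_def by simp
    qed
    thus False using f unfolding forest_def by blast
  qed
qed

lemma forest_edges:
  assumes f: "forest V E"
  shows "W \<subseteq> V \<Longrightarrow> W \<noteq> {} \<Longrightarrow> card {e\<in>E. e \<subseteq> W} < card W"
proof (induction "card W" arbitrary: W rule: less_induct)
  case less
  have finV: "finite V" using f unfolding forest_def simple_graph_def by blast
  have finW: "finite W" using less.prems finV by (meson finite_subset)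
  obtain w where w: "w \<in> W" "card {u\<in>W. {w,u} \<in> E} \<le> 1" using leaf_exists[OF f less.prems] by blast
  show ?case
  proof (cases "W = {w}")
    case True
    have "{e\<in>E. e \<subseteq> W} = {}"
    proof -
      { fix e assume "e \<in> E" "e \<subseteq> W"
        then obtain a b where "a \<noteq> b" "e = {a,b}" using forest_edge[OF f] by blast
        hence False using \<open>e \<subseteq> W\<close> True by auto }
      thus ?thesis by blast
    qed
    thus ?thesis using True by simp
  next
    case False
    define W' where "W' = W - {w}"
    have W'ne: "W' \<noteq> {}" using False w unfolding W'_def by blast
    have cW': "card W' < card W" unfolding W'_def using card_Diff1_less[OF finW w(1)] .
    have IH: "card {e\<in>E. e \<subseteq> W'} < card W'"
      using less.hyps[OF cW'] W'ne less.prems unfolding W'_def by blast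
    have sub: "{e\<in>E. e \<subseteq> W} \<subseteq> {e\<in>E. e \<subseteq> W'} \<union> (\<lambda>u. {w,u}) ` {u\<in>W. {w,u} \<in> E}"
    proof
      fix e assume e: "e \<in> {e\<in>E. e \<subseteq> W}"
      then obtain a b where ab: "a \<noteq> b" "e = {a,b}" using forest_edge[OF f] by blast
      show "e \<in> {e\<in>E. e \<subseteq> W'} \<union> (\<lambda>u. {w,u}) ` {u\<in>W. {w,u} \<in> E}"
      proof (cases "w \<in> e")
        case False thus ?thesis using e unfolding W'_def by auto
      next
        case True
        then have "a = w \<or> b = w" using ab by auto
        thus ?thesis using e ab by (auto simp: insert_commute)
      qed
    qed
    have finA: "finite {e\<in>E. e \<subseteq> W'}" using finW unfolding W'_def
      by (rule finite_subset[rotated, OF finite_Pow_iff[THEN iffD2]]) auto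
    have finB: "finite {u\<in>W. {w,u} \<in> E}" using finW by auto
    have "card {e\<in>E. e \<subseteq> W} \<le> card ({e\<in>E. e \<subseteq> W'} \<union> (\<lambda>u. {w,u}) ` {u\<in>W. {w,u} \<in> E})"
      using sub finA finB by (intro card_mono) auto
    also have "\<dots> \<le> card {e\<in>E. e \<subseteq> W'} + card ((\<lambda>u. {w,u}) ` {u\<in>W. {w,u} \<in> E})"
      by (rule card_Un_le)
    also have "\<dots> \<le> card {e\<in>E. e \<subseteq> W'} + card {u\<in>W. {w,u} \<in> E}"
      using card_image_le[OF finB] by simp
    also have "\<dots> < card W" using IH w(2) cW' unfolding W'_def using finW w(1)
      by (simp add: card_Diff_singleton card_gt_0_iff)
    finally show ?thesis .
  qed
qed




lemma cluster_of_eq: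
  assumes "partition_on V P" "X \<in> P" "u \<in> X"
  shows "cluster_of P u = X"
  unfolding cluster_of_def
proof (rule the_equality)
  show "X \<in> P \<and> u \<in> X" using assms by blast
  fix Y assume "Y \<in> P \<and> u \<in> Y"
  thus "Y = X" using assms partition_onD2[OF assms(1)] by (meson disjointD disjoint_iff)
qed

lemma same_cluster:
  assumes P: "partition_on V P" and "u \<in> V" "v \<in> V"
  shows "(cluster_of P u = cluster_of P v) \<longleftrightarrow> (\<exists>X\<in>P. u \<in> X \<and> v \<in> X)"
proof -
  obtain X where X: "X \<in> P" "u \<in> X" using assms partition_onD1[OF P] by blast
  obtain Y where Y: "Y \<in> P" "v \<in> Y" using assms partition_onD1[OF P] by blast
  show ?thesis using cluster_of_eq[OF P X] cluster_of_eq[OF P Y] X Y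
    by (metis cluster_of_eq[OF P])
qed

lemma edge_in_V: "forest V E \<Longrightarrow> e \<in> E \<Longrightarrow> e = {u,v} \<Longrightarrow> u \<in> V \<and> v \<in> V"
  using forest_edge by (metis doubleton_eq_iff)



lemma cost_split:
  assumes P: "partition_on V P" and S: "S \<in> P" and AB: "A \<union> B = S" "A \<inter> B = {}" "A \<noteq> {}" "B \<noteq> {}"
    and f: "forest V E"
  defines "Q \<equiv> insert A (insert B (P - {S}))" and "X \<equiv> {{u,v} | u v. u \<in> A \<and> v \<in> B}"
  shows "partition_on V Q" and "cost V E Q + card (X - E) = cost V E P + card (X \<inter> E)"
    and "card X = card A * card B"
proof -
  have finV: "finite V" using f unfolding forest_def simple_graph_def by blast
  have SV: "S \<subseteq> V" using P S partition_onD1 by blast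
  have disjS: "\<And>Y. Y \<in> P \<Longrightarrow> Y \<noteq> S \<Longrightarrow> Y \<inter> S = {}"
    using partition_onD2[OF P] S by (meson disjointD)
  have disjP: "\<And>Y Z. Y \<in> P \<Longrightarrow> Z \<in> P \<Longrightarrow> Y \<noteq> Z \<Longrightarrow> Y \<inter> Z = {}"
    using partition_onD2[OF P] by (meson disjointD)
  show PQ: "partition_on V Q"
    unfolding partition_on_def
  proof (intro conjI)
    have "\<Union> Q = A \<union> B \<union> \<Union>(P - {S})" unfolding Q_def by auto
    also have "\<dots> = \<Union>(insert S (P - {S}))" using AB(1) by auto
    also have "\<dots> = V" using S partition_onD1[OF P] by (simp add: insert_absorb)
    finally show "\<Union> Q = V" .
    show "{} \<notin> Q" using partition_onD3[OF P] AB(3,4) unfolding Q_def by auto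
    show "disjoint Q" unfolding Q_def disjoint_def
    proof (intro ballI impI)
      fix Y Z assume Y: "Y \<in> insert A (insert B (P - {S}))" and Z: "Z \<in> insert A (insert B (P - {S}))" and "Y \<noteq> Z"
      show "Y \<inter> Z = {}"
      proof -
        have h: "\<And>W. W \<in> P - {S} \<Longrightarrow> W \<inter> A = {} \<and> W \<inter> B = {}"
        proof -
          fix W assume "W \<in> P - {S}"
          hence "W \<inter> S = {}" using disjS by auto
          thus "W \<inter> A = {} \<and> W \<inter> B = {}" using AB(1) by auto
        qed
        from Y consider "Y = A" | "Y = B" | "Y \<in> P - {S}" by auto
        then show ?thesis
        proof cases
          case 1
          from Z consider "Z = B" | "Z \<in> P - {S}" using \<open>Y \<noteq> Z\<close> 1 by auto
          then show ?thesis using 1 h[of Z] AB(2) by cases auto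
        next
          case 2
          from Z consider "Z = A" | "Z \<in> P - {S}" using \<open>Y \<noteq> Z\<close> 2 by auto
          then show ?thesis using 2 h[of Z] AB(2) by cases auto
        next
          case 3
          from Z consider "Z = A" | "Z = B" | "Z \<in> P - {S}" by auto
          then show ?thesis using 3 h[of Y] disjP[of Y Z] \<open>Y \<noteq> Z\<close> by cases auto
        qed
      qed
    qed
  qed
  define sP where "sP = (\<lambda>u v. \<exists>Y\<in>P. u \<in> Y \<and> v \<in> Y)"
  define sQ where "sQ = (\<lambda>u v. \<exists>Y\<in>Q. u \<in> Y \<and> v \<in> Y)"
  define cr where "cr = (\<lambda>u v. (u \<in> A \<and> v \<in> B) \<or> (u \<in> B \<and> v \<in> A))"
  have sQ': "\<And>u v. sQ u v \<longleftrightarrow> (u\<in>A\<and>v\<in>A) \<or> (u\<in>B\<and>v\<in>B) \<or> (\<exists>Y\<in>P-{S}. u\<in>Y \<and> v\<in>Y)"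
    unfolding sQ_def Q_def by auto
  have sP': "\<And>u v. sP u v \<longleftrightarrow> (u\<in>S\<and>v\<in>S) \<or> (\<exists>Y\<in>P-{S}. u\<in>Y \<and> v\<in>Y)"
    unfolding sP_def using S by auto
  have out: "\<And>Y u. Y\<in>P-{S} \<Longrightarrow> u\<in>Y \<Longrightarrow> u\<notin>A \<and> u \<notin> B"
  proof -
    fix Y u assume "Y\<in>P-{S}" "u\<in>Y"
    hence "u \<notin> S" using disjS by auto
    thus "u\<notin>A \<and> u \<notin> B" using AB(1) by auto
  qed
  have memS: "\<And>x. x\<in>S \<longleftrightarrow> x\<in>A \<or> x\<in>B" using AB(1) by blast
  have AB0: "\<And>x. x \<in> A \<Longrightarrow> x \<notin> B" using AB(2) by blast
  have key: "\<And>u v. sQ u v \<longleftrightarrow> sP u v \<and> \<not> cr u v"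
    unfolding sQ' sP' cr_def memS using out AB0 by blast
  have crP: "\<And>u v. cr u v \<Longrightarrow> sP u v" unfolding sP' cr_def memS by blast
  have cP: "\<And>u v. u \<in> V \<Longrightarrow> v \<in> V \<Longrightarrow> (cluster_of P u = cluster_of P v) = sP u v"
    unfolding sP_def by (rule same_cluster[OF P])
  have cQ: "\<And>u v. u \<in> V \<Longrightarrow> v \<in> V \<Longrightarrow> (cluster_of Q u = cluster_of Q v) = sQ u v"
    unfolding sQ_def by (rule same_cluster[OF PQ])
  define NP where "NP = {{u, v} | u v. u \<in> V \<and> v \<in> V \<and> u \<noteq> v \<and> {u, v} \<notin> E \<and> sP u v}"
  define NQ where "NQ = {{u, v} | u v. u \<in> V \<and> v \<in> V \<and> u \<noteq> v \<and> {u, v} \<notin> E \<and> sQ u v}"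
  define CP where "CP = {e \<in> E. \<exists>u v. e = {u, v} \<and> \<not> sP u v}"
  define CQ where "CQ = {e \<in> E. \<exists>u v. e = {u, v} \<and> \<not> sQ u v}"
  have eqP: "\<And>e u v. e \<in> E \<Longrightarrow> e = {u,v} \<Longrightarrow> (cluster_of P u \<noteq> cluster_of P v) = (\<not> sP u v)"
    using cP edge_in_V[OF f] by metis
  have eqQ: "\<And>e u v. e \<in> E \<Longrightarrow> e = {u,v} \<Longrightarrow> (cluster_of Q u \<noteq> cluster_of Q v) = (\<not> sQ u v)"
    using cQ edge_in_V[OF f] by metis
  have costP: "cost V E P = card NP + card CP"
  proof -
    have "\<And>u v. (u \<in> V \<and> v \<in> V \<and> u \<noteq> v \<and> {u, v} \<notin> E \<and> cluster_of P u = cluster_of P v)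
       = (u \<in> V \<and> v \<in> V \<and> u \<noteq> v \<and> {u, v} \<notin> E \<and> sP u v)" using cP by metis
    hence 1: "{{u, v} | u v. u \<in> V \<and> v \<in> V \<and> u \<noteq> v \<and> {u, v} \<notin> E \<and>
                          cluster_of P u = cluster_of P v} = NP"
      unfolding NP_def by simp
    have "\<And>e. e \<in> E \<Longrightarrow> (\<exists>u v. e = {u, v} \<and> cluster_of P u \<noteq> cluster_of P v) = (\<exists>u v. e = {u, v} \<and> \<not> sP u v)"
      using eqP by metis
    hence 2: "{e \<in> E. \<exists>u v. e = {u, v} \<and> cluster_of P u \<noteq> cluster_of P v} = CP"
      unfolding CP_def by (intro Collect_cong) metis
    show ?thesis unfolding cost_def 1 2 ..
  qed
  have costQ: "cost V E Q = card NQ + card CQ"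
  proof -
    have "\<And>u v. (u \<in> V \<and> v \<in> V \<and> u \<noteq> v \<and> {u, v} \<notin> E \<and> cluster_of Q u = cluster_of Q v)
       = (u \<in> V \<and> v \<in> V \<and> u \<noteq> v \<and> {u, v} \<notin> E \<and> sQ u v)" using cQ by metis
    hence 1: "{{u, v} | u v. u \<in> V \<and> v \<in> V \<and> u \<noteq> v \<and> {u, v} \<notin> E \<and>
                          cluster_of Q u = cluster_of Q v} = NQ"
      unfolding NQ_def by simp
    have "\<And>e. e \<in> E \<Longrightarrow> (\<exists>u v. e = {u, v} \<and> cluster_of Q u \<noteq> cluster_of Q v) = (\<exists>u v. e = {u, v} \<and> \<not> sQ u v)"
      using eqQ by metis
    hence 2: "{e \<in> E. \<exists>u v. e = {u, v} \<and> cluster_of Q u \<noteq> cluster_of Q v} = CQ"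
      unfolding CQ_def by (intro Collect_cong) metis
    show ?thesis unfolding cost_def 1 2 ..
  qed
  have symP: "\<And>u v. sP u v = sP v u" unfolding sP_def by blast
  have symcr: "\<And>u v. cr u v = cr v u" unfolding cr_def by blast
  have NQ: "NQ = NP - X"
  proof
    show "NQ \<subseteq> NP - X"
    proof
      fix e assume "e \<in> NQ"
      then obtain u v where e: "e = {u,v}" "u \<in> V" "v \<in> V" "u \<noteq> v" "{u,v} \<notin> E" "sQ u v"
        unfolding NQ_def by blast
      have "e \<notin> X"
      proof
        assume "e \<in> X"
        then obtain a b where "a \<in> A" "b \<in> B" "e = {a,b}" unfolding X_def by blast
        hence "cr u v" using e unfolding cr_def by (auto simp: doubleton_eq_iff)
        thus False using e key by blast
      qed
      moreover have "e \<in> NP" unfolding NP_def using e key by blast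
      ultimately show "e \<in> NP - X" by blast
    qed
    show "NP - X \<subseteq> NQ"
    proof
      fix e assume "e \<in> NP - X"
      then obtain u v where e: "e = {u,v}" "u \<in> V" "v \<in> V" "u \<noteq> v" "{u,v} \<notin> E" "sP u v" "e \<notin> X"
        unfolding NP_def by blast
      have "\<not> cr u v"
      proof
        assume "cr u v"
        hence "e \<in> X" using e(1) unfolding cr_def X_def by (auto simp: insert_commute)
        thus False using e by blast
      qed
      thus "e \<in> NQ" unfolding NQ_def using e key by blast
    qed
  qed
  have NPX: "NP \<inter> X = X - E"
  proof
    show "NP \<inter> X \<subseteq> X - E" unfolding NP_def by blast
    show "X - E \<subseteq> NP \<inter> X"
    proof
      fix e assume "e \<in> X - E"
      then obtain a b where e: "a \<in> A" "b \<in> B" "e = {a,b}" "e \<notin> E" unfolding X_def by blast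
      have "a \<in> V" "b \<in> V" "a \<noteq> b" "sP a b" using e AB SV crP[of a b] unfolding cr_def by blast+
      thus "e \<in> NP \<inter> X" using e \<open>e \<in> X - E\<close> unfolding NP_def by blast
    qed
  qed
  have CQ: "CQ = CP \<union> (X \<inter> E)"
  proof
    show "CQ \<subseteq> CP \<union> (X \<inter> E)"
    proof
      fix e assume "e \<in> CQ"
      then obtain u v where e: "e \<in> E" "e = {u,v}" "\<not> sQ u v" unfolding CQ_def by blast
      show "e \<in> CP \<union> (X \<inter> E)"
      proof (cases "sP u v")
        case True
        hence "cr u v" using key e by blast
        hence "e \<in> X" using e(2) unfolding cr_def X_def by (auto simp: insert_commute)
        thus ?thesis using e by blast
      next
        case False thus ?thesis using e unfolding CP_def by blast
      qed
    qed
    show "CP \<union> (X \<inter> E) \<subseteq> CQ"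
    proof
      fix e assume "e \<in> CP \<union> (X \<inter> E)"
      then consider "e \<in> CP" | "e \<in> X \<inter> E" by blast
      thus "e \<in> CQ"
      proof cases
        case 1 thus ?thesis unfolding CP_def CQ_def using key by blast
      next
        case 2
        then obtain a b where "a \<in> A" "b \<in> B" "e = {a,b}" "e \<in> E" unfolding X_def by blast
        hence "cr a b" unfolding cr_def by blast
        thus ?thesis unfolding CQ_def using key \<open>e = {a,b}\<close> \<open>e \<in> E\<close> by blast
      qed
    qed
  qed
  have CPX: "CP \<inter> X = {}"
  proof -
    { fix e assume "e \<in> CP" "e \<in> X"
      then obtain u v a b where "e = {u,v}" "\<not> sP u v" "a \<in> A" "b \<in> B" "e = {a,b}"
        unfolding CP_def X_def by blast
      hence "sP a b" "\<not> sP a b" using crP[of a b] symP unfolding cr_def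
        by (auto simp: doubleton_eq_iff)
      hence False by blast }
    thus ?thesis by blast
  qed
  have finE: "finite E"
    by (rule finite_subset[of _ "Pow V"]) (use forest_edge[OF f] finV in auto)
  have finNP: "finite NP" unfolding NP_def
    by (rule finite_subset[of _ "Pow V"]) (use finV in auto)
  have finCP: "finite CP" unfolding CP_def using finE by simp
  have finX: "finite X" unfolding X_def
    by (rule finite_subset[of _ "Pow V"]) (use finV AB SV in auto)
  have "card NP = card (NP - X) + card (NP \<inter> X)"
    using finNP by (metis card_Diff_subset_Int card_Int_Diff add.commute finite_Int)
  moreover have "card CQ = card CP + card (X \<inter> E)"
    unfolding CQ using finCP finE CPX by (subst card_Un_disjoint) auto
  ultimately show "cost V E Q + card (X - E) = cost V E P + card (X \<inter> E)"
    using costP costQ NQ NPX by simp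
  have "X = (\<lambda>(a,b). {a,b}) ` (A \<times> B)" unfolding X_def by auto
  moreover have "inj_on (\<lambda>(a,b). {a,b}) (A \<times> B)"
    unfolding inj_on_def using AB by (auto simp: doubleton_eq_iff)
  ultimately show "card X = card A * card B"
    by (simp add: card_image card_cartesian_product)
qed



lemma card_by_colors:
  assumes "finite X" "col ` X \<subseteq> I" "finite I"
  shows "card X = (\<Sum>i\<in>I. card {x\<in>X. col x = i})"
proof -
  have "X = (\<Union>i\<in>I. {x\<in>X. col x = i})" using assms(2) by auto
  hence "card X = card (\<Union>i\<in>I. {x\<in>X. col x = i})" by simp
  also have "\<dots> = (\<Sum>i\<in>I. card {x\<in>X. col x = i})"
    by (rule card_UN_disjoint) (use assms in auto)
  finally show ?thesis .
qed

lemma choose_sub: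
  assumes S: "finite S" and I: "finite I" and F: "F \<subseteq> S"
    and a: "\<forall>i\<in>I. card {x\<in>F. col x = i} \<le> a i \<and> a i \<le> card {x\<in>S. col x = i}"
  shows "\<exists>A. F \<subseteq> A \<and> A \<subseteq> S \<and> (\<forall>i\<in>I. card {x\<in>A. col x = i} = a i)"
proof -
  have "\<forall>i\<in>I. \<exists>G. G \<subseteq> {x\<in>S-F. col x = i} \<and> card G = a i - card {x\<in>F. col x = i}"
  proof
    fix i assume i: "i \<in> I"
    have "{x\<in>S-F. col x = i} = {x\<in>S. col x = i} - {x\<in>F. col x = i}" by auto
    moreover have "{x\<in>F. col x = i} \<subseteq> {x\<in>S. col x = i}" using F by auto
    ultimately have "card {x\<in>S-F. col x = i} = card {x\<in>S. col x = i} - card {x\<in>F. col x = i}"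
      using S by (simp add: card_Diff_subset finite_subset)
    hence "a i - card {x\<in>F. col x = i} \<le> card {x\<in>S-F. col x = i}" using a i by auto
    thus "\<exists>G. G \<subseteq> {x\<in>S-F. col x = i} \<and> card G = a i - card {x\<in>F. col x = i}"
      by (meson obtain_subset_with_card_n)
  qed
  then obtain G where G: "\<forall>i\<in>I. G i \<subseteq> {x\<in>S-F. col x = i} \<and> card (G i) = a i - card {x\<in>F. col x = i}"
    by metis
  define A where "A = F \<union> \<Union>(G ` I)"
  have "\<forall>i\<in>I. card {x\<in>A. col x = i} = a i"
  proof
    fix i assume i: "i \<in> I"
    have "{x\<in>A. col x = i} = {x\<in>F. col x = i} \<union> G i"
      unfolding A_def using G i by auto
    moreover have "finite {x\<in>F. col x = i}" "finite (G i)" "{x\<in>F. col x = i} \<inter> G i = {}"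
      using S F G i by (auto intro: finite_subset)
    ultimately have "card {x\<in>A. col x = i} = card {x\<in>F. col x = i} + card (G i)"
      by (simp add: card_Un_disjoint)
    thus "card {x\<in>A. col x = i} = a i" using G i a by auto
  qed
  moreover have "F \<subseteq> A" "A \<subseteq> S" unfolding A_def using F G by auto
  ultimately show ?thesis by blast
qed

lemma arith_key:
  fixes m d x :: nat
  assumes "m \<ge> 2" "d \<ge> 3" "x + 2 \<le> m * d"
  shows "2 * x < d * ((m - 1) * d)"
proof -
  obtain n where n: "m = n + 2" using assms(1) by (metis add.commute le_Suc_ex)
  obtain e where e: "d = e + 3" using assms(2) by (metis add.commute le_Suc_ex)
  have 1: "2 * x + 4 \<le> 2 * ((n+2)*(e+3))" using assms(3) n e by simp
  have 2: "2 * ((n+2)*(e+3)) < (n+1)*(e+3)*(e+3) + 4" by (simp add: algebra_simps)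
  have 3: "d * ((m - 1) * d) = (n+1)*(e+3)*(e+3)" using n e by (simp add: algebra_simps)
  show ?thesis using 1 2 3 by linarith
qed



lemma card_col_diff:
  assumes "finite S" "B \<subseteq> S"
  shows "card {x\<in>S-B. col x = j} = card {x\<in>S. col x = j} - card {x\<in>B. col x = j}"
proof -
  have "{x\<in>S-B. col x = j} = {x\<in>S. col x = j} - {x\<in>B. col x = j}" by auto
  moreover have "{x\<in>B. col x = j} \<subseteq> {x\<in>S. col x = j}" using assms by auto
  ultimately show ?thesis using assms by (simp add: card_Diff_subset finite_subset)
qed

lemma card_pair_filter:
  "card {x\<in>{u,v}. P x} \<le> (if P u then 1 else 0) + (if P v then 1 else 0)"
proof -
  have "{x\<in>{u,v}. P x} = (if P u then {u} else {}) \<union> (if P v then {v} else {})" by auto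
  hence "card {x\<in>{u,v}. P x} \<le> card (if P u then {u} else {}) + card (if P v then {v} else {})"
    by (metis card_Un_le)
  thus ?thesis by (auto split: if_splits)
qed

theorem mainTheorem2:
  fixes V :: "'a set" and E :: "'a set set" and col :: "'a \<Rightarrow> nat"
    and k :: nat and c :: "nat \<Rightarrow> nat" and P :: "'a set set"
  assumes "forest V E"
    and "k \<ge> 2"
    and "col ` V \<subseteq> {1..k}"
    and "\<forall>i\<in>{1..k}. c i > 0"
    and "Gcd (c ` {1..k}) = 1"
    and "(\<Sum>i=1..k. c i) \<ge> 3"
    and "in_ratio V col k c"
    and "min_cost_fair_clustering V E col k P"
  shows "\<forall>S\<in>P. card S = (\<Sum>i=1..k. c i)"
proof
  fix S assume SP: "S \<in> P"
  have f: "forest V E" using assms(1) .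
  define d where "d = (\<Sum>i=1..k. c i)"
  obtain t where t0: "t > 0" and t: "\<forall>i\<in>{1..k}. card (color_class V col i) = t * c i"
    using assms(7) unfolding in_ratio_def by blast
  have finV: "finite V" using f unfolding forest_def simple_graph_def by blast
  have Pp: "partition_on V P" and fairP: "\<forall>S\<in>P. fair V col k S"
    and minP: "\<forall>Q. fair_clustering V col k Q \<longrightarrow> cost V E P \<le> cost V E Q"
    using assms(8) unfolding min_cost_fair_clustering_def fair_clustering_def by blast+
  have SV: "S \<subseteq> V" using Pp SP partition_onD1 by blast
  have Sne: "S \<noteq> {}" using Pp SP partition_onD3 by blast
  have finS: "finite S" using SV finV finite_subset by blast
  have d3: "d \<ge> 3" using assms(6) d_def by simp
  have cc: "\<And>X i. X \<subseteq> V \<Longrightarrow> X \<inter> color_class V col i = {x\<in>X. col x = i}"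
    unfolding color_class_def by auto
  have cardcol: "\<And>X. X \<subseteq> V \<Longrightarrow> card X = (\<Sum>i=1..k. card {x\<in>X. col x = i})"
  proof -
    fix X assume X: "X \<subseteq> V"
    show "card X = (\<Sum>i=1..k. card {x\<in>X. col x = i})"
      by (rule card_by_colors) (use X finV assms(3) finite_subset in auto)
  qed
  have cV: "card V = t * d"
  proof -
    have "card V = (\<Sum>i=1..k. card {x\<in>V. col x = i})" using cardcol by blast
    also have "\<dots> = (\<Sum>i=1..k. t * c i)" using t unfolding color_class_def by (intro sum.cong) auto
    also have "\<dots> = t * d" unfolding d_def by (simp add: sum_distrib_left)
    finally show ?thesis .
  qed
  have fair_counts: "\<And>X r. X \<subseteq> V \<Longrightarrow> r > 0 \<Longrightarrow> \<forall>i\<in>{1..k}. card {x\<in>X. col x = i} = r * c i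
      \<Longrightarrow> fair V col k X"
  proof -
    fix X r assume X: "X \<subseteq> V" and r: "r > 0" and cnt: "\<forall>i\<in>{1..k}. card {x\<in>X. col x = i} = r * c i"
    have "card X = (\<Sum>i=1..k. r * c i)" using cardcol[OF X] cnt by simp
    hence cX: "card X = r * d" unfolding d_def by (simp add: sum_distrib_left)
    show "fair V col k X" unfolding fair_def
    proof
      fix i assume i: "i \<in> {1..k}"
      have 1: "real (card (X \<inter> color_class V col i)) = real r * real (c i)" using cc[OF X] cnt i by simp
      have 2: "real (card (color_class V col i)) = real t * real (c i)" using t i by simp
      show "real (card (X \<inter> color_class V col i)) / real (card X) =
            real (card (color_class V col i)) / real (card V)"
        unfolding 1 2 cX cV using r t0 by simp
    qed
  qed
  have Sfair: "fair V col k S" using fairP SP by blast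
  have cS0: "card S > 0" using finS Sne by (simp add: card_gt_0_iff)
  have Scnt: "\<forall>i\<in>{1..k}. card {x\<in>S. col x = i} * d = c i * card S"
  proof
    fix i assume i: "i \<in> {1..k}"
    have "real (card (S \<inter> color_class V col i)) / real (card S) = real (card (color_class V col i)) / real (card V)"
      using Sfair i unfolding fair_def by blast
    hence "real (card {x\<in>S. col x = i}) / real (card S) = real (t * c i) / real (t * d)"
      using cc[OF SV] t i cV by simp
    hence "real (card {x\<in>S. col x = i}) * real d = real (c i) * real (card S)"
      using cS0 t0 d3 by (simp add: field_simps)
    thus "card {x\<in>S. col x = i} * d = c i * card S" by (metis of_nat_eq_iff of_nat_mult)
  qed
  have "d dvd card S"
  proof -
    have "d dvd Gcd ((*) (card S) ` (c ` {1..k}))"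
    proof (rule Gcd_greatest)
      fix b assume "b \<in> (*) (card S) ` c ` {1..k}"
      then obtain i where i: "i \<in> {1..k}" "b = card S * c i" by blast
      hence "b = d * card {x\<in>S. col x = i}" using Scnt by (simp add: mult.commute)
      thus "d dvd b" by simp
    qed
    moreover have "Gcd ((*) (card S) ` (c ` {1..k})) = normalize (card S * Gcd (c ` {1..k}))"
      by (rule Gcd_mult)
    moreover have "normalize (card S * Gcd (c ` {1..k})) = card S" unfolding assms(5) by simp
    ultimately show ?thesis by metis
  qed
  then obtain m where m: "card S = m * d" by (metis dvd_def mult.commute)
  have Scnt': "\<forall>i\<in>{1..k}. card {x\<in>S. col x = i} = m * c i"
    using Scnt m d3 by auto
  show "card S = (\<Sum>i=1..k. c i)"
  proof (rule ccontr)
    assume ne: "card S \<noteq> (\<Sum>i=1..k. c i)"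
    have m2: "m \<ge> 2" using ne m cS0 unfolding d_def[symmetric]
      by (cases m; cases "m - 1") auto
    have cpos: "\<And>i. i \<in> {1..k} \<Longrightarrow> c i \<ge> 1" using assms(4) by (simp add: Suc_le_eq)
    have kd: "k \<le> d"
    proof -
      have "(\<Sum>i=1..k. (1::nat)) \<le> d" unfolding d_def using cpos by (intro sum_mono) auto
      thus ?thesis by simp
    qed
    define ES where "ES = {e\<in>E. e \<subseteq> S}"
    have cES: "card ES < card S" using forest_edges[OF f SV Sne] unfolding ES_def .
    have finES: "finite ES" unfolding ES_def
      by (rule finite_subset[of _ "Pow S"]) (use finS in auto)
    define good where "good = (\<lambda>A. A \<subseteq> S \<and> (\<forall>i\<in>{1..k}. card {x\<in>A. col x = i} = c i))"
    define XX where "XX = (\<lambda>A. {{u,v} | u v. u \<in> A \<and> v \<in> S - A})"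
    have XXsub: "\<And>A. A \<subseteq> S \<Longrightarrow> XX A \<inter> E \<subseteq> ES" unfolding XX_def ES_def by auto
    have "\<exists>A. good A \<and> card (XX A \<inter> E) + 2 \<le> m * d"
    proof (cases "\<exists>e\<in>ES. \<exists>A. good A \<and> (e \<subseteq> A \<or> e \<inter> A = {})")
      case True
      then obtain e A where e: "e \<in> ES" and A: "good A" and eA: "e \<subseteq> A \<or> e \<inter> A = {}" by blast
      obtain a b where ab: "a \<noteq> b" "e = {a,b}" using e forest_edge[OF f] unfolding ES_def by blast
      have "e \<notin> XX A"
      proof
        assume "e \<in> XX A"
        then obtain u v where "u \<in> A" "v \<in> S - A" "e = {u,v}" unfolding XX_def by blast
        thus False using eA by auto
      qed
      hence "XX A \<inter> E \<subseteq> ES - {e}" using XXsub[of A] A unfolding good_def by blast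
      hence "card (XX A \<inter> E) \<le> card (ES - {e})" using finES by (intro card_mono) auto
      also have "\<dots> = card ES - 1" using e finES by simp
      finally have h1: "card (XX A \<inter> E) \<le> card ES - 1" .
      have "card ES > 0" using e finES card_gt_0_iff by blast
      hence "card (XX A \<inter> E) + 2 \<le> m * d" using h1 cES m by linarith
      thus ?thesis using A by blast
    next
      case False
      have "ES \<subseteq> (\<lambda>i. {x\<in>S. col x = i}) ` {1..k}"
      proof
        fix e assume e: "e \<in> ES"
        obtain u v where uv: "u \<noteq> v" "e = {u,v}" using e forest_edge[OF f] unfolding ES_def by blast
        have uvS: "u \<in> S" "v \<in> S" using e uv unfolding ES_def by auto
        have colu: "col u \<in> {1..k}" using uvS SV assms(3) by blast
        have nogood: "\<And>A. good A \<Longrightarrow> \<not> (e \<subseteq> A \<or> e \<inter> A = {})" using False e by blast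
        have sameC: "col u = col v"
        proof (rule ccontr)
          assume nc: "col u \<noteq> col v"
          have "\<exists>A. {u,v} \<subseteq> A \<and> A \<subseteq> S \<and> (\<forall>i\<in>{1..k}. card {x\<in>A. col x = i} = c i)"
          proof (rule choose_sub[OF finS finite_atLeastAtMost])
            show "{u,v} \<subseteq> S" using uvS by auto
            show "\<forall>i\<in>{1..k}. card {x\<in>{u,v}. col x = i} \<le> c i \<and> c i \<le> card {x\<in>S. col x = i}"
            proof
              fix i assume i: "i \<in> {1..k}"
              have "card {x\<in>{u,v}. col x = i} \<le> 1" by (rule order_trans[OF card_pair_filter]) (use nc in auto)
              thus "card {x\<in>{u,v}. col x = i} \<le> c i \<and> c i \<le> card {x\<in>S. col x = i}"
                using cpos[OF i] Scnt' i m2 by auto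
            qed
          qed
          thus False using nogood uv unfolding good_def by blast
        qed
        define i where "i = col u"
        have ci: "\<not> c i \<ge> 2"
        proof
          assume c2: "c i \<ge> 2"
          have "\<exists>A. {u,v} \<subseteq> A \<and> A \<subseteq> S \<and> (\<forall>i\<in>{1..k}. card {x\<in>A. col x = i} = c i)"
          proof (rule choose_sub[OF finS finite_atLeastAtMost])
            show "{u,v} \<subseteq> S" using uvS by auto
            show "\<forall>j\<in>{1..k}. card {x\<in>{u,v}. col x = j} \<le> c j \<and> c j \<le> card {x\<in>S. col x = j}"
            proof
              fix j assume j: "j \<in> {1..k}"
              have "card {x\<in>{u,v}. col x = j} \<le> (if j = i then 2 else 0)"
                by (rule order_trans[OF card_pair_filter]) (use sameC in \<open>auto simp: i_def\<close>)
              moreover have "(if j = i then 2 else 0) \<le> c j" using c2 by auto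
              moreover have "c j \<le> card {x\<in>S. col x = j}" using Scnt' j m2 by simp
              ultimately show "card {x\<in>{u,v}. col x = j} \<le> c j \<and> c j \<le> card {x\<in>S. col x = j}"
                by linarith
            qed
          qed
          thus False using nogood uv unfolding good_def by blast
        qed
        have m3: "\<not> m \<ge> 3"
        proof
          assume m3: "m \<ge> 3"
          have "\<exists>B. {u,v} \<subseteq> B \<and> B \<subseteq> S \<and> (\<forall>i\<in>{1..k}. card {x\<in>B. col x = i} = (m - 1) * c i)"
          proof (rule choose_sub[OF finS finite_atLeastAtMost])
            show "{u,v} \<subseteq> S" using uvS by auto
            show "\<forall>j\<in>{1..k}. card {x\<in>{u,v}. col x = j} \<le> (m - 1) * c j \<and> (m - 1) * c j \<le> card {x\<in>S. col x = j}"
            proof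
              fix j assume j: "j \<in> {1..k}"
              have "card {x\<in>{u,v}. col x = j} \<le> 2"
                by (rule order_trans[OF card_pair_filter]) auto
              moreover have "2 \<le> (m - 1) * c j"
              proof -
                have "2 \<le> m - 1" using m3 by simp
                thus ?thesis using mult_le_mono[of 2 "m-1" 1 "c j"] cpos[OF j] by simp
              qed
              ultimately show "card {x\<in>{u,v}. col x = j} \<le> (m - 1) * c j \<and> (m - 1) * c j \<le> card {x\<in>S. col x = j}"
                using Scnt' j by simp
            qed
          qed
          then obtain B where B: "{u,v} \<subseteq> B" "B \<subseteq> S" "\<forall>i\<in>{1..k}. card {x\<in>B. col x = i} = (m - 1) * c i"
            by blast
          have "good (S - B)" unfolding good_def
          proof (intro conjI ballI)
            show "S - B \<subseteq> S" by blast
            fix j assume j: "j \<in> {1..k}"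
            have "card {x\<in>S-B. col x = j} = m * c j - (m - 1) * c j"
              using card_col_diff[OF finS B(2), of col j] B(3) Scnt' j by simp
            moreover have "m * c j = (m - 1) * c j + c j" using m2 by (cases m) auto
            ultimately show "card {x\<in>S-B. col x = j} = c j" by linarith
          qed
          moreover have "e \<inter> (S - B) = {}" using B(1) uv by auto
          ultimately show False using nogood by blast
        qed
        have ci1: "c i = 1" using ci cpos colu unfolding i_def by fastforce
        have mm: "m = 2" using m2 m3 by simp
        have cardi: "card {x\<in>S. col x = i} = 2" using Scnt' colu ci1 mm unfolding i_def by simp
        have "{u,v} \<subseteq> {x\<in>S. col x = i}" using uvS sameC unfolding i_def by auto
        moreover have "card {u,v} = 2" using uv by simp
        ultimately have "{u,v} = {x\<in>S. col x = i}"
          by (intro card_subset_eq) (use finS cardi in auto)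
        thus "e \<in> (\<lambda>i. {x\<in>S. col x = i}) ` {1..k}" using uv colu unfolding i_def by blast
      qed
      hence "card ES \<le> card ((\<lambda>i. {x\<in>S. col x = i}) ` {1..k})" by (intro card_mono) auto
      also have "\<dots> \<le> k" using card_image_le[of "{1..k}" "\<lambda>i. {x\<in>S. col x = i}"] by simp
      finally have cESk: "card ES \<le> k" .
      obtain A where A: "{} \<subseteq> A" "A \<subseteq> S" "\<forall>i\<in>{1..k}. card {x\<in>A. col x = i} = c i"
      proof -
        have "\<forall>i\<in>{1..k}. card {x\<in>{}. col x = i} \<le> c i \<and> c i \<le> card {x\<in>S. col x = i}"
        proof
          fix i assume i: "i \<in> {1..k}"
          have "c i \<le> m * c i" using mult_le_mono1[of 1 m "c i"] m2 by simp
          thus "card {x\<in>{}. col x = i} \<le> c i \<and> c i \<le> card {x\<in>S. col x = i}" using Scnt' i by simp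
        qed
        then show ?thesis using choose_sub[OF finS finite_atLeastAtMost, where F="{}" and a=c and col=col] that
          by blast
      qed
      have "card (XX A \<inter> E) \<le> card ES" using XXsub[OF A(2)] finES by (intro card_mono) auto
      moreover have "m * d \<ge> 2 * d" using m2 by simp
      ultimately have "card (XX A \<inter> E) + 2 \<le> m * d" using cESk kd d3 by linarith
      thus ?thesis using A unfolding good_def by blast
    qed
    then obtain A where A: "good A" and bound: "card (XX A \<inter> E) + 2 \<le> m * d" by blast
    define B where "B = S - A"
    have AS: "A \<subseteq> S" and Acnt: "\<forall>i\<in>{1..k}. card {x\<in>A. col x = i} = c i"
      using A unfolding good_def by auto
    have Bcnt: "\<forall>i\<in>{1..k}. card {x\<in>B. col x = i} = (m - 1) * c i"
    proof
      fix j assume j: "j \<in> {1..k}"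
      have "card {x\<in>S-A. col x = j} = m * c j - c j"
        using card_col_diff[OF finS AS, of col j] Acnt Scnt' j by simp
      moreover have "m * c j = (m - 1) * c j + c j" using m2 by (cases m) auto
      ultimately show "card {x\<in>B. col x = j} = (m - 1) * c j" unfolding B_def by linarith
    qed
    have cA: "card A = d" using cardcol[of A] AS SV Acnt unfolding d_def by simp
    have cB: "card B = (m - 1) * d"
    proof -
      have BV: "B \<subseteq> V" using B_def SV by auto
      have "card B = (\<Sum>i=1..k. (m - 1) * c i)" using cardcol[OF BV] Bcnt by simp
      thus ?thesis unfolding d_def by (simp add: sum_distrib_left)
    qed
    have Ane: "A \<noteq> {}" using cA d3 by auto
    have Bne: "B \<noteq> {}" using cB d3 m2 by auto
    have AB: "A \<union> B = S" "A \<inter> B = {}" unfolding B_def using AS by auto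
    note cs = cost_split[OF Pp SP AB Ane Bne f]
    define Q where "Q = insert A (insert B (P - {S}))"
    have XXA: "XX A = {{u,v} | u v. u \<in> A \<and> v \<in> B}" unfolding XX_def B_def by simp
    have PQ: "partition_on V Q" using cs(1) unfolding Q_def .
    have fQ: "fair_clustering V col k Q"
      unfolding fair_clustering_def
    proof (intro conjI PQ ballI)
      fix Y assume "Y \<in> Q"
      then consider "Y = A" | "Y = B" | "Y \<in> P" unfolding Q_def by blast
      thus "fair V col k Y"
      proof cases
        case 1 thus ?thesis using fair_counts[of A 1] AS SV Acnt by auto
      next
        case 2 thus ?thesis using fair_counts[of B "m - 1"] B_def SV Bcnt m2 by auto
      next
        case 3 thus ?thesis using fairP by blast
      qed
    qed
    have finX: "finite (XX A)" unfolding XX_def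
      by (rule finite_subset[of _ "Pow S"]) (use finS AS in auto)
    have eq: "cost V E Q + card (XX A - E) = cost V E P + card (XX A \<inter> E)"
      using cs(2) unfolding Q_def XXA .
    have cX: "card (XX A) = card A * card B" using cs(3) unfolding XXA .
    have split: "card (XX A) = card (XX A - E) + card (XX A \<inter> E)"
      using finX by (metis card_Int_Diff inf_commute add.commute Int_commute)
    have "2 * card (XX A \<inter> E) < d * ((m - 1) * d)"
      by (rule arith_key[OF m2 d3 bound])
    moreover have "card (XX A) = d * ((m - 1) * d)" using cX cA cB by simp
    ultimately have "cost V E Q < cost V E P" using eq split by linarith
    thus False using minP fQ by fastforce
  qed
qed


end
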